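(* Let $k\ge 2$ be an integer. For any $\epsilon\in(0,1)$, let $N$ be the integer part of $1/\epsilon$. Then $\widetilde{Z}_k(N+1)\le Z_k(\epsilon)\le \widetilde{Z}_k(N)$.
   Context: $\mu_{k+1}(q)$ denotes the indicator function of the $(k+1)$-free positive integers (not divisible by $p^{k+1}$ for any prime $p$); $p$ always denotes a prime. For $\epsilon\in(0,1)$, \[ Z_k(\epsilon)=\sum_{q\ge 1/\epsilon}\mu_{k+1}(q)\sum_{\substack{1\le m\le q\epsilon\\ \gcd(m,q)=1}}\ \prod_{p\mid q}\frac{1}{(p^k-1)^2} \] (this is the normalized diffraction intensity $\nu_k((0,\epsilon])/\nu_k(\{0\})$ of the $k$-free integers). For $N\in\mathbb{N}$, \[ \widetilde{Z}_k(N):=\sum_{q\in\mathbb{N}}\mu_{k+1}(q)\Bigl(\prod_{p\mid q}\frac{1}{(p^k-1)^2}\Bigr)\#\{m\in\mathbb{N}\cap[1,q/N]:\gcd(m,q)=1\}. \] *)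

theory Defs
  imports "HOL-Analysis.Analysis" "HOL-Computational_Algebra.Primes"
begin

definition mu_free :: "nat \<Rightarrow> nat \<Rightarrow> real" where
  "mu_free j q = (if q \<ge> 1 \<and> (\<forall>p::nat. prime p \<longrightarrow> \<not> p ^ j dvd q) then 1 else 0)"

definition wt :: "nat \<Rightarrow> nat \<Rightarrow> real" where
  "wt k q = (\<Prod>p\<in>prime_factors q. 1 / (real p ^ k - 1)^2)"

definition Zk :: "nat \<Rightarrow> real \<Rightarrow> real" where
  "Zk k eps = (\<Sum>\<^sub>\<infinity>q\<in>{q::nat. q \<ge> 1 \<and> real q \<ge> 1 / eps}.
      mu_free (k+1) q *
      (\<Sum>m\<in>{m::nat. 1 \<le> m \<and> real m \<le> real q * eps} \<inter> {m. coprime m q}. wt k q))"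

definition Ztk :: "nat \<Rightarrow> nat \<Rightarrow> real" where
  "Ztk k N = (\<Sum>\<^sub>\<infinity>q\<in>{q::nat. q \<ge> 1}.
      mu_free (k+1) q * wt k q *
      real (card {m::nat. 1 \<le> m \<and> real m \<le> real q / real N \<and> coprime m q}))"

end

theory Submission imports Defs begin

definition hp :: "nat \<Rightarrow> nat \<Rightarrow> nat \<Rightarrow> real" where
  "hp k p a = (if a = 0 then 1 else real p ^ a / (real p ^ k - 1)^2)"

lemma hp_nonneg: "hp k p a \<ge> 0"
  unfolding hp_def by auto

lemma local_sum_bound:
  assumes "k \<ge> 2" "prime p"
  shows "(\<Sum>a\<le>k. hp k p a) \<le> 1 + 4 * real k / real p ^ 2"
proof -
  have p2: "real p \<ge> 2" using prime_ge_2_nat[OF assms(2)] by simp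
  define x where "x = real p ^ k"
  have x4: "x \<ge> 4"
  proof -
    have "real p ^ k \<ge> 2 ^ k" using p2 by (simp add: power_mono)
    moreover have "(2::real) ^ k \<ge> 2 ^ 2" using power_increasing[of 2 k "2::real"] assms(1) by simp
    ultimately show ?thesis unfolding x_def by simp
  qed
  have xp2: "x \<ge> real p ^ 2" unfolding x_def using assms(1) p2 by (simp add: power_increasing)
  have each: "hp k p a \<le> 4 / real p ^ 2" if "1 \<le> a" "a \<le> k" for a
  proof -
    have "real p ^ a \<le> x" unfolding x_def using that p2 by (simp add: power_increasing)
    hence "hp k p a \<le> x / (x - 1)^2" unfolding hp_def x_def[symmetric] using that
      by (auto intro!: divide_right_mono)
    also have "\<dots> \<le> 4 / x"
    proof -
      have "0 \<le> (3*x-2)*(x-2)" using x4 by (intro mult_nonneg_nonneg) auto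
      hence "x * x \<le> 4 * (x-1)^2" by (simp add: power2_eq_square algebra_simps)
      moreover have "(x-1)^2 > 0" using x4 by simp
      ultimately show ?thesis using x4 by (simp add: divide_simps)
    qed
    also have "\<dots> \<le> 4 / real p ^ 2" using xp2 p2 by (simp add: frac_le)
    finally show ?thesis .
  qed
  have "(\<Sum>a\<le>k. hp k p a) = hp k p 0 + (\<Sum>a\<in>{1..k}. hp k p a)"
    by (simp add: atMost_atLeast0 sum.atLeast_Suc_atMost)
  also have "\<dots> \<le> 1 + (\<Sum>a\<in>{1..k}. 4 / real p ^ 2)"
    apply (intro add_mono sum_mono)
     apply (simp add: hp_def)
    using each by auto
  also have "\<dots> = 1 + 4 * real k / real p ^ 2" by simp
  finally show ?thesis .
qed

definition SS :: real where "SS = suminf (\<lambda>n::nat. inverse (real n ^ 2))"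

lemma prod_bound:
  assumes "k \<ge> 2" "finite P" "\<And>p. p \<in> P \<Longrightarrow> prime p"
  shows "(\<Prod>p\<in>P. \<Sum>a\<le>k. hp k p a) \<le> exp (4 * real k * SS)"
proof -
  have "(\<Prod>p\<in>P. \<Sum>a\<le>k. hp k p a) \<le> (\<Prod>p\<in>P. exp (4 * real k * inverse (real p ^ 2)))"
  proof (intro prod_mono conjI)
    fix p assume "p \<in> P"
    show "0 \<le> (\<Sum>a\<le>k. hp k p a)" by (intro sum_nonneg hp_nonneg)
    have "(\<Sum>a\<le>k. hp k p a) \<le> 1 + 4 * real k / real p ^ 2"
      using local_sum_bound[OF assms(1) assms(3)[OF \<open>p \<in> P\<close>]] .
    also have "\<dots> \<le> exp (4 * real k * inverse (real p ^ 2))"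
      using exp_ge_add_one_self[of "4 * real k * inverse (real p ^ 2)"] by (simp add: field_simps)
    finally show "(\<Sum>a\<le>k. hp k p a) \<le> exp (4 * real k * inverse (real p ^ 2))" .
  qed
  also have "\<dots> = exp (\<Sum>p\<in>P. 4 * real k * inverse (real p ^ 2))"
    using assms(2) by (simp add: exp_sum)
  also have "\<dots> \<le> exp (4 * real k * SS)"
  proof -
    have sm: "summable (\<lambda>n::nat. inverse (real n ^ 2))"
      using inverse_power_summable[of 2, where 'a=real] by simp
    have "(\<Sum>p\<in>P. inverse (real p ^ 2)) \<le> SS"
      unfolding SS_def using sm assms(2) by (intro sum_le_suminf) auto
    hence "(\<Sum>p\<in>P. 4 * real k * inverse (real p ^ 2)) \<le> 4 * real k * SS"
      by (simp add: sum_distrib_left[symmetric] mult_left_mono)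
    thus ?thesis by simp
  qed
  finally show ?thesis .
qed

lemma mu_free_cases: "mu_free j q = 0 \<or> mu_free j q = 1"
  unfolding mu_free_def by auto

lemma wt_nonneg: "wt k q \<ge> 0"
  unfolding wt_def by (intro prod_nonneg) auto

lemma factor_identity:
  assumes "q \<ge> 1" "finite P" "prime_factors q \<subseteq> P" "\<And>p. p \<in> P \<Longrightarrow> prime p"
  shows "wt k q * real q = (\<Prod>p\<in>P. hp k p (multiplicity p q))"
proof -
  have "real q = (\<Prod>p\<in>prime_factors q. real p ^ multiplicity p q)"
    using prod_prime_factors[of q] assms(1) by (simp flip: of_nat_prod of_nat_power)
  hence "wt k q * real q = (\<Prod>p\<in>prime_factors q. 1 / (real p ^ k - 1)^2) * (\<Prod>p\<in>prime_factors q. real p ^ multiplicity p q)"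
    unfolding wt_def by simp
  also have "\<dots> = (\<Prod>p\<in>prime_factors q. 1 / (real p ^ k - 1)^2 * real p ^ multiplicity p q)"
    by (rule prod.distrib[symmetric])
  also have "\<dots> = (\<Prod>p\<in>prime_factors q. hp k p (multiplicity p q))"
  proof (rule prod.cong[OF refl])
    fix p assume p: "p \<in> prime_factors q"
    hence "multiplicity p q > 0" using assms(1)
      by (auto simp: prime_factors_multiplicity)
    thus "1 / (real p ^ k - 1)^2 * real p ^ multiplicity p q = hp k p (multiplicity p q)"
      unfolding hp_def by simp
  qed
  also have "\<dots> = (\<Prod>p\<in>P. hp k p (multiplicity p q))"
  proof (rule prod.mono_neutral_left[OF assms(2) assms(3)])
    show "\<forall>p\<in>P - prime_factors q. hp k p (multiplicity p q) = 1"
      using assms(1,4) by (auto simp: hp_def in_prime_factors_iff not_dvd_imp_multiplicity_0)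
  qed
  finally show ?thesis .
qed

lemma fin_bound:
  assumes "k \<ge> 2" "finite F" "F \<subseteq> {q. q \<ge> 1}"
  shows "(\<Sum>q\<in>F. mu_free (k+1) q * wt k q * real q) \<le> exp (4 * real k * SS)"
proof -
  define G where "G = {q\<in>F. mu_free (k+1) q = 1}"
  have finG: "finite G" using assms(2) unfolding G_def by simp
  have "(\<Sum>q\<in>F. mu_free (k+1) q * wt k q * real q) = (\<Sum>q\<in>G. mu_free (k+1) q * wt k q * real q)"
  proof (rule sum.mono_neutral_right[OF assms(2)])
    show "G \<subseteq> F" unfolding G_def by blast
    show "\<forall>q\<in>F-G. mu_free (k+1) q * wt k q * real q = 0"
    proof
      fix q assume "q \<in> F - G"
      hence "mu_free (k+1) q \<noteq> 1" unfolding G_def by blast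
      hence "mu_free (k+1) q = 0" using mu_free_cases by metis
      thus "mu_free (k+1) q * wt k q * real q = 0" by simp
    qed
  qed
  also have "\<dots> = (\<Sum>q\<in>G. wt k q * real q)" unfolding G_def by simp
  finally have eq1: "(\<Sum>q\<in>F. mu_free (k+1) q * wt k q * real q) = (\<Sum>q\<in>G. wt k q * real q)" .
  obtain M where M: "\<And>q. q \<in> F \<Longrightarrow> q \<le> M"
  proof -
    have "\<And>q. q \<in> F \<Longrightarrow> q \<le> Max (insert 0 F)" using assms(2) by simp
    thus ?thesis using that by blast
  qed
  define P where "P = {p. prime p \<and> p \<le> M}"
  have finP: "finite P" unfolding P_def by (rule finite_subset[of _ "{..M}"]) auto
  have Gq: "q \<ge> 1" "q \<le> M" "\<And>p. prime p \<Longrightarrow> \<not> p ^ (k+1) dvd q" if "q \<in> G" for q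
  proof -
    have "q \<in> F" "mu_free (k+1) q = 1" using that unfolding G_def by auto
    thus "q \<ge> 1" "q \<le> M" "\<And>p. prime p \<Longrightarrow> \<not> p ^ (k+1) dvd q"
      using assms(3) M unfolding mu_free_def by (auto split: if_splits)
  qed
  have pfP: "prime_factors q \<subseteq> P" if "q \<in> G" for q
  proof
    fix p assume p: "p \<in> prime_factors q"
    hence "p dvd q" "prime p" by auto
    hence "p \<le> q" using Gq(1)[OF that] by (intro dvd_imp_le) auto
    thus "p \<in> P" using Gq(2)[OF that] \<open>prime p\<close> unfolding P_def by auto
  qed
  define e where "e q = restrict (\<lambda>p. multiplicity p q) P" for q
  have ident: "wt k q * real q = (\<Prod>p\<in>P. hp k p (e q p))" if "q \<in> G" for q
    using factor_identity[OF Gq(1)[OF that] finP pfP[OF that], of k] P_def unfolding e_def by simp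
  have inj: "inj_on e G"
  proof (rule inj_onI)
    fix x y assume xy: "x \<in> G" "y \<in> G" "e x = e y"
    show "x = y"
    proof (rule multiplicity_eq_nat)
      show "x > 0" "y > 0" using Gq(1)[OF xy(1)] Gq(1)[OF xy(2)] by auto
      fix p :: nat assume p: "prime p"
      show "multiplicity p x = multiplicity p y"
      proof (cases "p \<in> P")
        case True
        thus ?thesis using fun_cong[OF xy(3), of p] unfolding e_def by simp
      next
        case False
        hence "p > M" using p unfolding P_def by auto
        have b: "1 \<le> x" "x \<le> M" "1 \<le> y" "y \<le> M"
          using Gq(1,2)[OF xy(1)] Gq(1,2)[OF xy(2)] by auto
        have "\<not> p dvd x"
        proof
          assume "p dvd x" hence "p \<le> x" by (rule dvd_imp_le) (use b in simp)
          thus False using b \<open>p > M\<close> by simp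
        qed
        moreover have "\<not> p dvd y"
        proof
          assume "p dvd y" hence "p \<le> y" by (rule dvd_imp_le) (use b in simp)
          thus False using b \<open>p > M\<close> by simp
        qed
        ultimately show ?thesis by (simp add: not_dvd_imp_multiplicity_0)
      qed
    qed
  qed
  have img: "e ` G \<subseteq> PiE P (\<lambda>_. {..k})"
  proof
    fix f assume "f \<in> e ` G"
    then obtain q where q: "q \<in> G" "f = e q" by auto
    have "multiplicity p q \<le> k" if "p \<in> P" for p
    proof (rule ccontr)
      assume "\<not> multiplicity p q \<le> k"
      hence "p ^ (k+1) dvd q" by (intro multiplicity_dvd') auto
      thus False using Gq(3)[OF q(1)] that unfolding P_def by auto
    qed
    thus "f \<in> PiE P (\<lambda>_. {..k})" unfolding q(2) e_def by auto
  qed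
  have "(\<Sum>q\<in>G. wt k q * real q) = (\<Sum>q\<in>G. \<Prod>p\<in>P. hp k p (e q p))"
    using ident by simp
  also have "\<dots> = (\<Sum>f\<in>e ` G. \<Prod>p\<in>P. hp k p (f p))"
    using sum.reindex[OF inj, of "\<lambda>f. \<Prod>p\<in>P. hp k p (f p)"] by simp
  also have "\<dots> \<le> (\<Sum>f\<in>PiE P (\<lambda>_. {..k}). \<Prod>p\<in>P. hp k p (f p))"
    using img finP by (intro sum_mono2 finite_PiE) (auto intro!: prod_nonneg hp_nonneg)
  also have "\<dots> = (\<Prod>p\<in>P. \<Sum>a\<le>k. hp k p a)"
    using finP by (subst prod_sum_PiE) auto
  also have "\<dots> \<le> exp (4 * real k * SS)"
    using finP assms(1) by (intro prod_bound) (auto simp: P_def)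
  finally show ?thesis using eq1 by simp
qed

lemma h_summable:
  assumes "k \<ge> 2"
  shows "(\<lambda>q. mu_free (k+1) q * wt k q * real q) summable_on {q. q \<ge> 1}"
proof (rule nonneg_bdd_above_summable_on)
  show "\<And>x. x \<in> {q. q \<ge> 1} \<Longrightarrow> 0 \<le> mu_free (k+1) x * wt k x * real x"
    using wt_nonneg by (auto simp: mu_free_def)
  show "bdd_above ((sum (\<lambda>q. mu_free (k+1) q * wt k q * real q)) ` {F. F \<subseteq> {q. q \<ge> 1} \<and> finite F})"
    using fin_bound[OF assms] by (intro bdd_aboveI[of _ "exp (4 * real k * SS)"]) auto
qed

lemma C_fin: "finite {m::nat. 1 \<le> m \<and> real m \<le> x \<and> coprime m q}"
proof (rule finite_subset[of _ "{..nat \<lceil>x\<rceil>}"])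
  show "{m::nat. 1 \<le> m \<and> real m \<le> x \<and> coprime m q} \<subseteq> {..nat \<lceil>x\<rceil>}"
  proof
    fix m assume "m \<in> {m::nat. 1 \<le> m \<and> real m \<le> x \<and> coprime m q}"
    hence "real m \<le> x" by simp
    hence "real m \<le> real_of_int \<lceil>x\<rceil>" by linarith
    hence "int m \<le> \<lceil>x\<rceil>" by linarith
    thus "m \<in> {..nat \<lceil>x\<rceil>}" by simp
  qed
qed simp

lemma C_mono:
  assumes "x \<le> y"
  shows "card {m::nat. 1 \<le> m \<and> real m \<le> x \<and> coprime m q} \<le> card {m::nat. 1 \<le> m \<and> real m \<le> y \<and> coprime m q}"
  by (rule card_mono[OF C_fin]) (use assms in auto)

lemma C_le:
  assumes "x \<le> real q"
  shows "card {m::nat. 1 \<le> m \<and> real m \<le> x \<and> coprime m q} \<le> q"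
proof -
  have "card {m::nat. 1 \<le> m \<and> real m \<le> x \<and> coprime m q} \<le> card {1..q}"
    by (rule card_mono) (use assms in auto)
  thus ?thesis by simp
qed

lemma C_empty:
  assumes "x < 1"
  shows "card {m::nat. 1 \<le> m \<and> real m \<le> x \<and> coprime m q} = 0"
proof -
  have "{m::nat. 1 \<le> m \<and> real m \<le> x \<and> coprime m q} = {}" using assms by auto
  thus ?thesis by (metis card.empty)
qed

lemma T_summable:
  assumes "k \<ge> 2" "real M \<ge> 1"
  shows "(\<lambda>q. mu_free (k+1) q * wt k q *
      real (card {m::nat. 1 \<le> m \<and> real m \<le> real q / real M \<and> coprime m q})) summable_on {q. q \<ge> 1}"
proof (rule summable_on_comparison_test[OF h_summable[OF assms(1)]])
  fix q :: nat assume q: "q \<in> {q. q \<ge> 1}"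
  have m01: "0 \<le> mu_free (k+1) q" "mu_free (k+1) q \<le> 1" using mu_free_cases[of "k+1" q] by auto
  have "real q / real M \<le> real q" using assms(2) by (simp add: divide_le_eq mult_le_cancel_left1 q)
  hence c: "card {m::nat. 1 \<le> m \<and> real m \<le> real q / real M \<and> coprime m q} \<le> q" by (rule C_le)
  show "0 \<le> mu_free (k+1) q * wt k q *
      real (card {m::nat. 1 \<le> m \<and> real m \<le> real q / real M \<and> coprime m q})"
    using m01 wt_nonneg by simp
  show "mu_free (k+1) q * wt k q *
      real (card {m::nat. 1 \<le> m \<and> real m \<le> real q / real M \<and> coprime m q}) \<le> mu_free (k+1) q * wt k q * real q"
    using m01 wt_nonneg c by (intro mult_left_mono) auto
qed

theorem lemma2p1:
  fixes k :: nat and eps :: real and N :: nat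
  assumes "k \<ge> 2" and "0 < eps" and "eps < 1" and "N = nat \<lfloor>1 / eps\<rfloor>"
  shows "Ztk k (N + 1) \<le> Zk k eps \<and> Zk k eps \<le> Ztk k N"
proof -
  have inv1: "1 / eps > 1" using assms(2,3) by (simp add: field_simps)
  have fl: "real_of_int \<lfloor>1/eps\<rfloor> \<le> 1/eps" "1/eps < real_of_int \<lfloor>1/eps\<rfloor> + 1" by linarith+
  have fl1: "\<lfloor>1/eps\<rfloor> \<ge> 1" using inv1 by linarith
  have iN: "int N = \<lfloor>1/eps\<rfloor>" unfolding assms(4) using fl1 by (intro nat_0_le) linarith
  have RN: "real N = real_of_int \<lfloor>1/eps\<rfloor>" by (metis iN of_int_of_nat_eq)
  have N1: "real N \<ge> 1" using RN fl1 by simp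
  have hN: "real N \<le> 1/eps" "1/eps < real N + 1" using fl RN by auto
  have epsN: "eps \<le> 1 / real N" using hN(1) N1 assms(2) by (simp add: field_simps)
  have epsN1: "1 / (real N + 1) < eps" using hN(2) assms(2) N1 by (simp add: field_simps)
  define A where "A = {q::nat. q \<ge> 1}"
  define B where "B = {q::nat. q \<ge> 1 \<and> real q \<ge> 1 / eps}"
  define T where "T M q = mu_free (k+1) q * wt k q *
      real (card {m::nat. 1 \<le> m \<and> real m \<le> real q / real M \<and> coprime m q})" for M q
  define Z where "Z q = mu_free (k+1) q *
      (\<Sum>m\<in>{m::nat. 1 \<le> m \<and> real m \<le> real q * eps} \<inter> {m. coprime m q}. wt k q)" for q
  have ZkZ: "Zk k eps = infsum Z B" unfolding Zk_def Z_def B_def by simp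
  have TN: "Ztk k M = infsum (T M) A" for M unfolding Ztk_def T_def A_def by simp
  have Zeq: "Z q = mu_free (k+1) q * wt k q *
      real (card {m::nat. 1 \<le> m \<and> real m \<le> real q * eps \<and> coprime m q})" for q
  proof -
    have "{m::nat. 1 \<le> m \<and> real m \<le> real q * eps} \<inter> {m. coprime m q} =
          {m::nat. 1 \<le> m \<and> real m \<le> real q * eps \<and> coprime m q}" by auto
    thus ?thesis unfolding Z_def by simp
  qed
  have m01: "0 \<le> mu_free (k+1) q" "mu_free (k+1) q \<le> 1" for q using mu_free_cases[of "k+1" q] by auto
  have sumT: "T M summable_on A" if "real M \<ge> 1" for M
    unfolding T_def A_def using T_summable[OF assms(1) that] .
  have sumZ: "Z summable_on B"
  proof (rule summable_on_comparison_test)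
    show "(\<lambda>q. mu_free (k+1) q * wt k q * real q) summable_on B"
      by (rule summable_on_subset_banach[OF h_summable[OF assms(1)]]) (auto simp: B_def)
    fix q assume q: "q \<in> B"
    have "real q * eps \<le> real q" using assms(3) by (simp add: mult_left_le)
    hence c: "card {m::nat. 1 \<le> m \<and> real m \<le> real q * eps \<and> coprime m q} \<le> q" by (rule C_le)
    show "0 \<le> Z q" unfolding Zeq using m01 wt_nonneg by simp
    show "Z q \<le> mu_free (k+1) q * wt k q * real q"
      unfolding Zeq using m01 wt_nonneg c by (intro mult_left_mono) auto
  qed
  have part1: "infsum (T (N+1)) A \<le> infsum Z B"
  proof (rule infsum_mono_neutral[OF sumT sumZ])
    show "1 \<le> real (N+1)" by simp
    fix q assume q: "q \<in> A \<inter> B"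
    have e: "1 \<le> eps * (real N + 1)" using epsN1 N1 by (simp add: field_simps)
    have "real q \<le> real q * (eps * (real N + 1))" using mult_left_mono[OF e, of "real q"] by simp
    hence "real q \<le> real q * eps * real (N+1)" by (simp add: algebra_simps)
    hence "real q / real (N+1) \<le> real q * eps" by (subst pos_divide_le_eq) auto
    note c = C_mono[OF this, of q]
    show "T (N+1) q \<le> Z q" unfolding T_def Zeq using m01 wt_nonneg c
      by (intro mult_left_mono) auto
  next
    fix q assume q: "q \<in> A - B"
    hence "real q < 1 / eps" unfolding A_def B_def by auto
    hence "real q < real N + 1" using hN by linarith
    hence "real q / real (N+1) < 1" by (simp add: divide_simps)
    thus "T (N+1) q \<le> 0" unfolding T_def using C_empty by simp
  next
    fix q assume "q \<in> B - A" thus "0 \<le> Z q" unfolding A_def B_def by auto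
  qed
  have part2: "infsum Z B \<le> infsum (T N) A"
  proof (rule infsum_mono_neutral[OF sumZ sumT[OF N1]])
    fix q assume q: "q \<in> B \<inter> A"
    have e: "eps * real N \<le> 1" using epsN N1 by (simp add: field_simps)
    have "real q * (eps * real N) \<le> real q" using mult_left_mono[OF e, of "real q"] by simp
    hence "real q * eps * real N \<le> real q" by (simp add: algebra_simps)
    hence "real q * eps \<le> real q / real N" using N1 by (subst pos_le_divide_eq) auto
    note c = C_mono[OF this, of q]
    show "Z q \<le> T N q" unfolding T_def Zeq using m01 wt_nonneg c
      by (intro mult_left_mono) auto
  next
    fix q assume "q \<in> B - A" thus "Z q \<le> 0" unfolding A_def B_def by auto
  next
    fix q assume "q \<in> A - B" thus "0 \<le> T N q" unfolding T_def using m01 wt_nonneg by simp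
  qed
  show ?thesis using part1 part2 ZkZ TN by simp
qed

end
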